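(* Let $\alpha>-1$ and let $\phi(w)=aw+b$ with $a>0$ and $\mathrm{Re}(b)\ge 0$. Then $C_\phi$ is absolutely Cesàro bounded on $\mathcal{A}^2_\alpha(\mathbb{C}_+)$ if and only if $a\ge 1$.
   Context: $\mathbb{N}$ denotes the positive integers. $\mathbb{C}_+=\{z\in\mathbb{C}:\mathrm{Re}(z)>0\}$. For $\alpha>-1$, $\mathcal{A}^2_\alpha(\mathbb{C}_+)$ is the Hilbert space of analytic $f:\mathbb{C}_+\to\mathbb{C}$ with $\|f\|^2=\frac{1}{\pi}\int_{-\infty}^{\infty}\int_0^\infty |f(x+iy)|^2x^\alpha\,dx\,dy<\infty$. $C_\phi f=f\circ\phi$ is the (bounded) composition operator. A bounded operator $T$ on a Banach space $X$ is absolutely Cesàro bounded if there is $M>0$ such that $\sup_{n\in\mathbb{N}}\frac{1}{n}\sum_{j=1}^n\|T^jx\|\le M\|x\|$ for all $x\in X$. *)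

theory Defs
  imports "HOL-Analysis.Analysis"
begin

definition C_plus :: "complex set" where
  "C_plus = {z. Re z > 0}"

definition bergman_norm2 :: "real \<Rightarrow> (complex \<Rightarrow> complex) \<Rightarrow> ennreal" where
  "bergman_norm2 \<alpha> f =
     ennreal (1 / pi) *
     (\<integral>\<^sup>+ z. indicator C_plus z * ennreal ((cmod (f z))\<^sup>2 * (Re z) powr \<alpha>) \<partial>lborel)"

definition bergman_space :: "real \<Rightarrow> (complex \<Rightarrow> complex) set" where
  "bergman_space \<alpha> = {f. f holomorphic_on C_plus \<and> bergman_norm2 \<alpha> f < \<infinity>}"

definition bergman_norm :: "real \<Rightarrow> (complex \<Rightarrow> complex) \<Rightarrow> real" where
  "bergman_norm \<alpha> f = sqrt (enn2real (bergman_norm2 \<alpha> f))"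

definition abs_cesaro_bounded ::
  "'a set \<Rightarrow> ('a \<Rightarrow> real) \<Rightarrow> ('a \<Rightarrow> 'a) \<Rightarrow> bool" where
  "abs_cesaro_bounded X nrm T \<longleftrightarrow>
     (\<exists>M>0. \<forall>x\<in>X. \<forall>n::nat. n \<ge> 1 \<longrightarrow>
        (1 / real n) * (\<Sum>j=1..n. nrm ((T ^^ j) x)) \<le> M * nrm x)"

definition comp_op :: "(complex \<Rightarrow> complex) \<Rightarrow> (complex \<Rightarrow> complex) \<Rightarrow> (complex \<Rightarrow> complex)" where
  "comp_op \<phi> f = f \<circ> \<phi>"

end

theory Submission
  imports Defs "HOL-Complex_Analysis.Complex_Analysis"
begin

lemma measurable_Complex_pair[measurable]:
  "(\<lambda>p. Complex (fst p) (snd p)) \<in> borel_measurable (lborel \<Otimes>\<^sub>M lborel)"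
proof -
  have "(\<lambda>p::real\<times>real. Complex (fst p) (snd p)) = (\<lambda>p. of_real (fst p) + \<i> * of_real (snd p))"
    by (auto simp: Complex_eq)
  then show ?thesis by (simp add: borel_prod[symmetric])
qed

lemma lborel_complex: "(lborel :: complex measure) = distr (lborel \<Otimes>\<^sub>M lborel) borel (\<lambda>p. Complex (fst p) (snd p))"
proof (rule lborel_eqI)
  fix l u :: complex
  assume le: "\<And>b. b \<in> Basis \<Longrightarrow> l \<bullet> b \<le> u \<bullet> b"
  then have le1: "Re l \<le> Re u" and le2: "Im l \<le> Im u"
    using le[of 1] le[of \<i>] by (auto simp: Basis_complex_def)
  have pre: "(\<lambda>p. Complex (fst p) (snd p)) -` box l u \<inter> space (lborel \<Otimes>\<^sub>M lborel)
     = {Re l<..<Re u} \<times> {Im l<..<Im u}"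
    by (auto simp: in_box_complex_iff space_pair_measure)
  have "emeasure (distr (lborel \<Otimes>\<^sub>M lborel) borel (\<lambda>p. Complex (fst p) (snd p))) (box l u)
      = emeasure (lborel \<Otimes>\<^sub>M lborel) ({Re l<..<Re u} \<times> {Im l<..<Im u})"
    by (subst emeasure_distr) (auto simp: pre)
  also have "\<dots> = ennreal (Re u - Re l) * ennreal (Im u - Im l)"
    by (subst lborel.emeasure_pair_measure_Times) (auto simp: le1 le2)
  also have "\<dots> = (\<Prod>b\<in>Basis. (u - l) \<bullet> b)"
    using le1 le2 by (simp add: Basis_complex_def ennreal_mult)
  finally show "emeasure (distr (lborel \<Otimes>\<^sub>M lborel) borel (\<lambda>p. Complex (fst p) (snd p))) (box l u) = (\<Prod>b\<in>Basis. (u - l) \<bullet> b)" .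
qed simp

lemma nn_integral_complex:
  assumes [measurable]: "h \<in> borel_measurable (borel :: complex measure)"
  shows "(\<integral>\<^sup>+z. h z \<partial>lborel) = (\<integral>\<^sup>+x. \<integral>\<^sup>+y. h (Complex x y) \<partial>lborel \<partial>lborel)"
proof -
  have "(\<integral>\<^sup>+z. h z \<partial>lborel) = (\<integral>\<^sup>+p. h (Complex (fst p) (snd p)) \<partial>(lborel \<Otimes>\<^sub>M lborel))"
    by (subst lborel_complex) (simp add: nn_integral_distr)
  also have "\<dots> = (\<integral>\<^sup>+x. \<integral>\<^sup>+y. h (Complex x y) \<partial>lborel \<partial>lborel)"
    by (subst lborel.nn_integral_fst[symmetric]) auto
  finally show ?thesis .
qed

lemma side_bound:
  fixes f :: "complex \<Rightarrow> complex"
  assumes cont: "continuous_on (closed_segment a b) f" and nz: "z \<notin> closed_segment a b"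
    and dist: "\<And>t. t \<in> {0..1} \<Longrightarrow> s \<le> cmod (linepath a b t - z)"
    and ab: "cmod (b - a) = 2 * s" and s: "s > 0"
  shows "\<exists>I. ((\<lambda>w. (f w)^2/(w - z)) has_contour_integral I) (linepath a b) \<and>
            cmod I \<le> 2 * integral {0..1} (\<lambda>t. (cmod (f (linepath a b t)))^2)"
proof -
  let ?h = "\<lambda>w. (f w)^2/(w - z)"
  have hc: "continuous_on (closed_segment a b) ?h"
    using nz by (intro continuous_intros cont) auto
  define I where "I = contour_integral (linepath a b) ?h"
  have hI: "(?h has_contour_integral I) (linepath a b)"
    unfolding I_def by (rule has_contour_integral_integral[OF contour_integrable_continuous_linepath[OF hc]])
  then have hI': "((\<lambda>x. ?h (linepath a b x) * (b - a)) has_integral I) {0..1}"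
    by (simp add: has_contour_integral_linepath)
  have fl: "continuous_on {0..1} (\<lambda>t. f (linepath a b t))"
    by (rule continuous_on_compose2[OF cont]) (auto intro: continuous_intros simp: linepath_in_path)
  have "cmod (integral {0..1} (\<lambda>x. ?h (linepath a b x) * (b - a)))
      \<le> integral {0..1} (\<lambda>t. 2 * (cmod (f (linepath a b t)))^2)"
  proof (rule integral_norm_bound_integral)
    show "(\<lambda>x. ?h (linepath a b x) * (b - a)) integrable_on {0..1}" using hI' by blast
    show "(\<lambda>t. 2 * (cmod (f (linepath a b t)))^2) integrable_on {0..1}"
      by (intro integrable_continuous_real continuous_intros fl)
    fix t :: real assume t: "t \<in> {0..1}"
    have d: "s \<le> cmod (linepath a b t - z)" using dist[OF t] .
    have "cmod (?h (linepath a b t) * (b - a)) = (cmod (f (linepath a b t)))^2 * (2 * s) / cmod (linepath a b t - z)"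
      by (simp add: norm_mult norm_divide norm_power ab)
    also have "\<dots> \<le> (cmod (f (linepath a b t)))^2 * (2 * s) / s"
      using d s by (intro divide_left_mono mult_nonneg_nonneg) (auto intro!: mult_pos_pos)
    also have "\<dots> = 2 * (cmod (f (linepath a b t)))^2" using s by simp
    finally show "cmod (?h (linepath a b t) * (b - a)) \<le> 2 * (cmod (f (linepath a b t)))^2" .
  qed
  also have "\<dots> = 2 * integral {0..1} (\<lambda>t. (cmod (f (linepath a b t)))^2)"
    by simp
  finally show ?thesis using hI hI'[THEN integral_unique] by auto
qed

lemma rect_submean:
  fixes f :: "complex \<Rightarrow> complex"
  assumes holo: "f holomorphic_on C_plus" and s: "0 < s" "s < x"
  shows "(cmod (f (Complex x y)))^2 \<le> (1/pi) *
     (integral {0..1} (\<lambda>t. (cmod (f (Complex (x - s + 2 * s * t) (y - s))))^2) +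
      integral {0..1} (\<lambda>t. (cmod (f (Complex (x + s) (y - s + 2 * s * t))))^2) +
      integral {0..1} (\<lambda>t. (cmod (f (Complex (x + s - 2 * s * t) (y + s))))^2) +
      integral {0..1} (\<lambda>t. (cmod (f (Complex (x - s) (y + s - 2 * s * t))))^2))"
proof -
  define z where "z = Complex x y"
  define a1 where "a1 = Complex (x - s) (y - s)"
  define a2 where "a2 = Complex (x + s) (y - s)"
  define a3 where "a3 = Complex (x + s) (y + s)"
  define a4 where "a4 = Complex (x - s) (y + s)"
  have conv: "convex C_plus" unfolding C_plus_def by (rule convex_halfspace_Re_gt)
  have opn: "open C_plus" unfolding C_plus_def by (rule open_halfspace_Re_gt)
  have fc: "continuous_on C_plus f" using holo holomorphic_on_imp_continuous_on by blast
  have inC: "a1 \<in> C_plus" "a2 \<in> C_plus" "a3 \<in> C_plus" "a4 \<in> C_plus"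
    using s by (auto simp: C_plus_def a1_def a2_def a3_def a4_def)
  have seg: "closed_segment a b \<subseteq> C_plus" if "a \<in> C_plus" "b \<in> C_plus" for a b
    using closed_segment_subset[OF that conv] .
  have l1: "linepath a1 a2 t = Complex (x - s + 2 * s * t) (y - s)" for t
    by (simp add: linepath_def a1_def a2_def complex_eq_iff algebra_simps)
  have l2: "linepath a2 a3 t = Complex (x + s) (y - s + 2 * s * t)" for t
    by (simp add: linepath_def a2_def a3_def complex_eq_iff algebra_simps)
  have l3: "linepath a3 a4 t = Complex (x + s - 2 * s * t) (y + s)" for t
    by (simp add: linepath_def a3_def a4_def complex_eq_iff algebra_simps)
  have l4: "linepath a4 a1 t = Complex (x - s) (y + s - 2 * s * t)" for t
    by (simp add: linepath_def a4_def a1_def complex_eq_iff algebra_simps)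
  have d1: "s \<le> cmod (linepath a1 a2 t - z)" for t
    using abs_Im_le_cmod[of "linepath a1 a2 t - z"] s by (simp add: l1 z_def)
  have d2: "s \<le> cmod (linepath a2 a3 t - z)" for t
    using abs_Re_le_cmod[of "linepath a2 a3 t - z"] s by (simp add: l2 z_def)
  have d3: "s \<le> cmod (linepath a3 a4 t - z)" for t
    using abs_Im_le_cmod[of "linepath a3 a4 t - z"] s by (simp add: l3 z_def)
  have d4: "s \<le> cmod (linepath a4 a1 t - z)" for t
    using abs_Re_le_cmod[of "linepath a4 a1 t - z"] s by (simp add: l4 z_def)
  have nz: "z \<notin> closed_segment a b" if "\<And>t. s \<le> cmod (linepath a b t - z)" for a b
  proof
    assume "z \<in> closed_segment a b"
    then obtain t where "z = linepath a b t" using linepath_image_01[of a b] by auto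
    with that[of t] s show False by simp
  qed
  have sq4: "sqrt (4 * s^2) = 2 * s"
  proof -
    have "sqrt (4 * s^2) = sqrt ((2 * s)^2)" by (simp add: power2_eq_square)
    also have "\<dots> = 2 * s" using s by (subst real_sqrt_abs) simp
    finally show ?thesis .
  qed
  have ab1: "cmod (a2 - a1) = 2 * s" using s by (simp add: a1_def a2_def cmod_def sq4)
  have ab2: "cmod (a3 - a2) = 2 * s" using s by (simp add: a3_def a2_def cmod_def sq4)
  have ab3: "cmod (a4 - a3) = 2 * s" using s by (simp add: a3_def a4_def cmod_def sq4)
  have ab4: "cmod (a1 - a4) = 2 * s" using s by (simp add: a1_def a4_def cmod_def sq4)
  obtain I1 where I1: "((\<lambda>w. (f w)^2/(w - z)) has_contour_integral I1) (linepath a1 a2)"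
     "cmod I1 \<le> 2 * integral {0..1} (\<lambda>t. (cmod (f (linepath a1 a2 t)))^2)"
    using side_bound[OF continuous_on_subset[OF fc seg[OF inC(1,2)]] nz[OF d1] d1 ab1 s(1)] by blast
  obtain I2 where I2: "((\<lambda>w. (f w)^2/(w - z)) has_contour_integral I2) (linepath a2 a3)"
     "cmod I2 \<le> 2 * integral {0..1} (\<lambda>t. (cmod (f (linepath a2 a3 t)))^2)"
    using side_bound[OF continuous_on_subset[OF fc seg[OF inC(2,3)]] nz[OF d2] d2 ab2 s(1)] by blast
  obtain I3 where I3: "((\<lambda>w. (f w)^2/(w - z)) has_contour_integral I3) (linepath a3 a4)"
     "cmod I3 \<le> 2 * integral {0..1} (\<lambda>t. (cmod (f (linepath a3 a4 t)))^2)"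
    using side_bound[OF continuous_on_subset[OF fc seg[OF inC(3,4)]] nz[OF d3] d3 ab3 s(1)] by blast
  obtain I4 where I4: "((\<lambda>w. (f w)^2/(w - z)) has_contour_integral I4) (linepath a4 a1)"
     "cmod I4 \<le> 2 * integral {0..1} (\<lambda>t. (cmod (f (linepath a4 a1 t)))^2)"
    using side_bound[OF continuous_on_subset[OF fc seg[OF inC(4,1)]] nz[OF d4] d4 ab4 s(1)] by blast
  have rp: "rectpath a1 a3 = linepath a1 a2 +++ linepath a2 a3 +++ linepath a3 a4 +++ linepath a4 a1"
    by (simp add: rectpath_def Let_def a1_def a2_def a3_def a4_def)
  have J: "((\<lambda>w. (f w)^2/(w - z)) has_contour_integral (I1 + (I2 + (I3 + I4)))) (rectpath a1 a3)"
    unfolding rp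
    by (intro has_contour_integral_join I1(1) I2(1) I3(1) I4(1) valid_path_join) auto
  have zbox: "z \<in> box a1 a3" using s by (simp add: in_box_complex_iff z_def a1_def a3_def)
  have le13: "Re a1 \<le> Re a3" "Im a1 \<le> Im a3" using s by (auto simp: a1_def a3_def)
  have cb: "cbox a1 a3 \<subseteq> C_plus" using s by (auto simp: in_cbox_complex_iff a1_def a3_def C_plus_def)
  have zC: "z \<in> C_plus" using s by (simp add: z_def C_plus_def)
  have C: "((\<lambda>w. (f w)^2/(w - z)) has_contour_integral (2*pi * \<i> * winding_number (rectpath a1 a3) z * (f z)^2)) (rectpath a1 a3)"
  proof (rule Cauchy_integral_formula_convex_simple[OF conv])
    show "(\<lambda>w. (f w)^2) holomorphic_on C_plus" using holo by (intro holomorphic_intros)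
    show "z \<in> interior C_plus" using zC opn by (simp add: interior_open)
    show "valid_path (rectpath a1 a3)" by simp
    show "path_image (rectpath a1 a3) \<subseteq> C_plus - {z}"
      using cb zbox by (auto simp: path_image_rectpath_cbox_minus_box[OF le13])
    show "pathfinish (rectpath a1 a3) = pathstart (rectpath a1 a3)" by simp
  qed
  have "2*pi * \<i> * (f z)^2 = I1 + (I2 + (I3 + I4))"
    using has_contour_integral_unique[OF C J] winding_number_rectpath[OF zbox] by simp
  then have "2 * pi * (cmod (f z))^2 = cmod (I1 + (I2 + (I3 + I4)))"
    by (metis norm_mult norm_power norm_ii norm_of_real mult_1_right abs_of_nonneg pi_ge_zero
          mult_nonneg_nonneg zero_le_numeral norm_numeral of_real_mult of_real_numeral)
  also have "\<dots> \<le> cmod I1 + cmod I2 + cmod I3 + cmod I4"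
    by (metis add.assoc norm_triangle_le order_refl add_mono)
  finally have "2 * pi * (cmod (f z))^2 \<le> 2 * (integral {0..1} (\<lambda>t. (cmod (f (linepath a1 a2 t)))^2) +
     integral {0..1} (\<lambda>t. (cmod (f (linepath a2 a3 t)))^2) + integral {0..1} (\<lambda>t. (cmod (f (linepath a3 a4 t)))^2) +
     integral {0..1} (\<lambda>t. (cmod (f (linepath a4 a1 t)))^2))"
    using I1(2) I2(2) I3(2) I4(2) unfolding distrib_left by linarith
  then show ?thesis
    by (simp add: l1 l2 l3 l4 z_def field_simps)
qed

definition Gf :: "(complex \<Rightarrow> complex) \<Rightarrow> complex \<Rightarrow> real" where
  "Gf f z = indicator C_plus z * (cmod (f z))^2"

definition Phi :: "(complex \<Rightarrow> complex) \<Rightarrow> real \<Rightarrow> ennreal" where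
  "Phi f x = (\<integral>\<^sup>+y. ennreal (Gf f (Complex x y)) \<partial>lborel)"

lemma C_plus_borel[measurable]: "C_plus \<in> sets borel"
  unfolding C_plus_def by (intro borel_open open_halfspace_Re_gt)

lemma Gf_meas:
  assumes "f holomorphic_on C_plus"
  shows "Gf f \<in> borel_measurable borel"
proof -
  have "continuous_on C_plus (\<lambda>z. (cmod (f z))^2)"
    using assms by (intro continuous_intros holomorphic_on_imp_continuous_on)
  from borel_measurable_continuous_on_indicator[OF C_plus_borel this]
  show ?thesis by (simp add: Gf_def[abs_def])
qed

lemma measurable_Complex[measurable (raw)]:
  assumes [measurable]: "f \<in> borel_measurable M" "g \<in> borel_measurable M"
  shows "(\<lambda>x. Complex (f x) (g x)) \<in> borel_measurable M"
proof -
  have "(\<lambda>x. Complex (f x) (g x)) = (\<lambda>x. of_real (f x) + \<i> * of_real (g x))"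
    by (auto simp: Complex_eq)
  then show ?thesis by simp
qed

lemma Gf_nonneg: "Gf f z \<ge> 0" by (simp add: Gf_def)

lemma Gf_in: "Re z > 0 \<Longrightarrow> Gf f z = (cmod (f z))^2"
  by (simp add: Gf_def C_plus_def)

lemma Phi_meas:
  assumes "f holomorphic_on C_plus"
  shows "Phi f \<in> borel_measurable borel"
proof -
  note [measurable] = Gf_meas[OF assms]
  show ?thesis unfolding Phi_def[abs_def] by measurable
qed

lemma norm2_Phi:
  assumes "f holomorphic_on C_plus"
  shows "bergman_norm2 \<alpha> f = ennreal (1/pi) * (\<integral>\<^sup>+x. ennreal (indicator {0<..} x * x powr \<alpha>) * Phi f x \<partial>lborel)"
proof -
  note [measurable] = Gf_meas[OF assms]
  have eq: "indicator C_plus z * ennreal ((cmod (f z))\<^sup>2 * (Re z) powr \<alpha>) = ennreal (Gf f z * (Re z) powr \<alpha>)" for z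
    by (auto simp: Gf_def indicator_def)
  have "(\<integral>\<^sup>+ z. indicator C_plus z * ennreal ((cmod (f z))\<^sup>2 * (Re z) powr \<alpha>) \<partial>lborel)
     = (\<integral>\<^sup>+ z. ennreal (Gf f z * (Re z) powr \<alpha>) \<partial>lborel)"
    by (simp add: eq)
  also have "\<dots> = (\<integral>\<^sup>+x. \<integral>\<^sup>+y. ennreal (Gf f (Complex x y) * x powr \<alpha>) \<partial>lborel \<partial>lborel)"
    by (subst nn_integral_complex) auto
  also have "\<dots> = (\<integral>\<^sup>+x. ennreal (indicator {0<..} x * x powr \<alpha>) * Phi f x \<partial>lborel)"
  proof (rule nn_integral_cong)
    fix x :: real
    show "(\<integral>\<^sup>+y. ennreal (Gf f (Complex x y) * x powr \<alpha>) \<partial>lborel) = ennreal (indicator {0<..} x * x powr \<alpha>) * Phi f x"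
    proof (cases "x > 0")
      case True
      then show ?thesis unfolding Phi_def
        by (subst nn_integral_cmult[symmetric]) (auto simp: ennreal_mult' Gf_nonneg mult.commute intro!: nn_integral_cong)
    next
      case False
      then have "Gf f (Complex x y) = 0" for y by (simp add: Gf_def C_plus_def)
      then show ?thesis using False by simp
    qed
  qed
  finally show ?thesis unfolding bergman_norm2_def by simp
qed

lemma integral_nonneg_any:
  fixes f :: "'a::euclidean_space \<Rightarrow> real"
  assumes "\<And>x. 0 \<le> f x" shows "0 \<le> integral S f"
  using assms by (cases "f integrable_on S") (auto intro: integral_nonneg simp: not_integrable_integral)

lemma seg_int:
  fixes p :: "real \<Rightarrow> complex"
  assumes holo: "f holomorphic_on C_plus" and pc: "continuous_on {0..1} p"
    and pin: "\<And>t. t \<in> {0..1} \<Longrightarrow> Re (p t) > 0"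
  shows "(\<integral>\<^sup>+t. ennreal (Gf f (p t)) * indicator {0..1} t \<partial>lborel)
         = ennreal (integral {0..1} (\<lambda>t. (cmod (f (p t)))^2))"
proof -
  have fc: "continuous_on C_plus f" using holo holomorphic_on_imp_continuous_on by blast
  have "p ` {0..1} \<subseteq> C_plus" using pin by (auto simp: C_plus_def)
  then have c: "continuous_on {0..1} (\<lambda>t. (cmod (f (p t)))^2)"
    by (intro continuous_intros continuous_on_compose2[OF fc pc]) auto
  have hi: "((\<lambda>t. (cmod (f (p t)))^2) has_integral integral {0..1} (\<lambda>t. (cmod (f (p t)))^2)) {0..1}"
    by (rule integrable_integral[OF integrable_continuous_interval[OF c]])
  have "(\<integral>\<^sup>+t. ennreal (Gf f (p t)) * indicator {0..1} t \<partial>lborel)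
      = (\<integral>\<^sup>+t. ennreal ((cmod (f (p t)))^2) * indicator {0..1} t \<partial>lborel)"
    by (intro nn_integral_cong) (auto simp: indicator_def Gf_in pin)
  also have "\<dots> = ennreal (integral {0..1} (\<lambda>t. (cmod (f (p t)))^2))"
    by (rule nn_integral_has_integral_lebesgue'[OF _ hi]) simp
  finally show ?thesis .
qed

lemma pointwise_submean:
  assumes holo: "f holomorphic_on C_plus" and s: "0 < s" "s < x"
  shows "ennreal (Gf f (Complex x y)) \<le> ennreal (1/pi) *
     ((\<integral>\<^sup>+t. ennreal (Gf f (Complex (x - s + 2 * s * t) (y - s))) * indicator {0..1} t \<partial>lborel) +
      (\<integral>\<^sup>+t. ennreal (Gf f (Complex (x + s) (y - s + 2 * s * t))) * indicator {0..1} t \<partial>lborel) +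
      (\<integral>\<^sup>+t. ennreal (Gf f (Complex (x + s - 2 * s * t) (y + s))) * indicator {0..1} t \<partial>lborel) +
      (\<integral>\<^sup>+t. ennreal (Gf f (Complex (x - s) (y + s - 2 * s * t))) * indicator {0..1} t \<partial>lborel))"
proof -
  let ?i1 = "integral {0..1} (\<lambda>t. (cmod (f (Complex (x - s + 2 * s * t) (y - s))))^2)"
  let ?i2 = "integral {0..1} (\<lambda>t. (cmod (f (Complex (x + s) (y - s + 2 * s * t))))^2)"
  let ?i3 = "integral {0..1} (\<lambda>t. (cmod (f (Complex (x + s - 2 * s * t) (y + s))))^2)"
  let ?i4 = "integral {0..1} (\<lambda>t. (cmod (f (Complex (x - s) (y + s - 2 * s * t))))^2)"
  have e1: "(\<integral>\<^sup>+t. ennreal (Gf f (Complex (x - s + 2 * s * t) (y - s))) * indicator {0..1} t \<partial>lborel) = ennreal ?i1"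
  proof (intro seg_int[OF holo])
    fix t :: real assume "t \<in> {0..1}"
    then have "0 \<le> 2 * s * t" using s by simp
    then show "Re (Complex (x - s + 2 * s * t) (y - s)) > 0" using s by simp
  qed (auto intro!: continuous_intros simp: continuous_on_Complex)
  have e2: "(\<integral>\<^sup>+t. ennreal (Gf f (Complex (x + s) (y - s + 2 * s * t))) * indicator {0..1} t \<partial>lborel) = ennreal ?i2"
    using s by (intro seg_int[OF holo]) (auto intro!: continuous_intros simp: continuous_on_Complex)
  have e3: "(\<integral>\<^sup>+t. ennreal (Gf f (Complex (x + s - 2 * s * t) (y + s))) * indicator {0..1} t \<partial>lborel) = ennreal ?i3"
  proof (intro seg_int[OF holo])
    fix t :: real assume "t \<in> {0..1}"
    then have "2 * s * t \<le> 2 * s" using s by (simp add: mult_left_le)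
    moreover have "Re (Complex (x + s - 2 * s * t) (y + s)) = x + s - 2 * s * t" by simp
    ultimately show "Re (Complex (x + s - 2 * s * t) (y + s)) > 0" using s by linarith
  qed (auto intro!: continuous_intros simp: continuous_on_Complex)
  have e4: "(\<integral>\<^sup>+t. ennreal (Gf f (Complex (x - s) (y + s - 2 * s * t))) * indicator {0..1} t \<partial>lborel) = ennreal ?i4"
    using s by (intro seg_int[OF holo]) (auto intro!: continuous_intros simp: continuous_on_Complex)
  have nn: "?i1 \<ge> 0" "?i2 \<ge> 0" "?i3 \<ge> 0" "?i4 \<ge> 0"
    by (auto intro!: integral_nonneg_any)
  have "Gf f (Complex x y) \<le> (1/pi) * (?i1 + ?i2 + ?i3 + ?i4)"
    using rect_submean[OF holo s] s by (simp add: Gf_in)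
  then have "ennreal (Gf f (Complex x y)) \<le> ennreal ((1/pi) * (?i1 + ?i2 + ?i3 + ?i4))"
    by (rule ennreal_leI)
  also have "\<dots> = ennreal (1/pi) * (ennreal ?i1 + ennreal ?i2 + ennreal ?i3 + ennreal ?i4)"
    using nn by (subst ennreal_mult) (auto simp: ennreal_plus)
  finally show ?thesis by (simp add: e1 e2 e3 e4)
qed

lemma Phi_shift:
  assumes holo: "f holomorphic_on C_plus"
  shows "(\<integral>\<^sup>+y. ennreal (Gf f (Complex a (b + y))) \<partial>lborel) = Phi f a"
proof -
  note [measurable] = Gf_meas[OF holo]
  have "Phi f a = ennreal \<bar>1\<bar> * (\<integral>\<^sup>+y. ennreal (Gf f (Complex a (b + 1 * y))) \<partial>lborel)"
    unfolding Phi_def by (rule nn_integral_real_affine) auto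
  then show ?thesis by simp
qed

lemma Phi_affine_avg:
  assumes holo: "f holomorphic_on C_plus" and c: "c \<noteq> 0"
    and ind: "\<And>t. indicator S (a + c * t) = (indicator {0..1} t :: ennreal)"
    and S[measurable]: "S \<in> sets borel"
  shows "(\<integral>\<^sup>+t. Phi f (a + c * t) * indicator {0..1} t \<partial>lborel)
       = ennreal (1 / \<bar>c\<bar>) * (\<integral>\<^sup>+u. Phi f u * indicator S u \<partial>lborel)"
proof -
  note [measurable] = Phi_meas[OF holo]
  have "(\<integral>\<^sup>+u. Phi f u * indicator S u \<partial>lborel) = ennreal \<bar>c\<bar> * (\<integral>\<^sup>+t. Phi f (a + c * t) * indicator S (a + c * t) \<partial>lborel)"
    by (rule nn_integral_real_affine[OF _ c]) auto
  also have "\<dots> = ennreal \<bar>c\<bar> * (\<integral>\<^sup>+t. Phi f (a + c * t) * indicator {0..1} t \<partial>lborel)"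
    by (simp add: ind)
  finally have eq: "(\<integral>\<^sup>+u. Phi f u * indicator S u \<partial>lborel) = ennreal \<bar>c\<bar> * (\<integral>\<^sup>+t. Phi f (a + c * t) * indicator {0..1} t \<partial>lborel)" .
  have "ennreal (1 / \<bar>c\<bar>) * ennreal \<bar>c\<bar> = 1"
    using c by (subst ennreal_mult[symmetric]) auto
  then show ?thesis unfolding eq by (simp add: mult.assoc[symmetric])
qed

lemma Phi_submean:
  assumes holo: "f holomorphic_on C_plus" and s: "0 < s" "s < x"
  shows "Phi f x \<le> ennreal (1/pi) * (Phi f (x + s) + Phi f (x - s) +
            ennreal (1/s) * (\<integral>\<^sup>+u. Phi f u * indicator {x - s..x + s} u \<partial>lborel))"
proof -
  note [measurable] = Gf_meas[OF holo] Phi_meas[OF holo]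
  define J where "J = (\<integral>\<^sup>+u. Phi f u * indicator {x - s..x + s} u \<partial>lborel)"
  let ?B = "\<lambda>y. \<integral>\<^sup>+t. ennreal (Gf f (Complex (x - s + 2 * s * t) (y - s))) * indicator {0..1} t \<partial>lborel"
  let ?R = "\<lambda>y. \<integral>\<^sup>+t. ennreal (Gf f (Complex (x + s) (y - s + 2 * s * t))) * indicator {0..1} t \<partial>lborel"
  let ?T = "\<lambda>y. \<integral>\<^sup>+t. ennreal (Gf f (Complex (x + s - 2 * s * t) (y + s))) * indicator {0..1} t \<partial>lborel"
  let ?L = "\<lambda>y. \<integral>\<^sup>+t. ennreal (Gf f (Complex (x - s) (y + s - 2 * s * t))) * indicator {0..1} t \<partial>lborel"
  have swap: "(\<integral>\<^sup>+y. \<integral>\<^sup>+t. ennreal (Gf f (Complex (p t) (q t + y))) * indicator {0..1} t \<partial>lborel \<partial>lborel)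
        = (\<integral>\<^sup>+t. Phi f (p t) * indicator {0..1} t \<partial>lborel)"
    if [measurable]: "p \<in> borel_measurable borel" "q \<in> borel_measurable borel" for p q :: "real \<Rightarrow> real"
  proof -
    have "(\<integral>\<^sup>+y. \<integral>\<^sup>+t. ennreal (Gf f (Complex (p t) (q t + y))) * indicator {0..1} t \<partial>lborel \<partial>lborel)
        = (\<integral>\<^sup>+t. \<integral>\<^sup>+y. ennreal (Gf f (Complex (p t) (q t + y))) * indicator {0..1} t \<partial>lborel \<partial>lborel)"
      using lborel_pair.Fubini[of "\<lambda>(t,y). ennreal (Gf f (Complex (p t) (q t + y))) * indicator {0..1} t"]
      by simp
    also have "\<dots> = (\<integral>\<^sup>+t. (\<integral>\<^sup>+y. ennreal (Gf f (Complex (p t) (q t + y))) \<partial>lborel) * indicator {0..1} t \<partial>lborel)"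
      by (intro nn_integral_cong nn_integral_multc) auto
    also have "\<dots> = (\<integral>\<^sup>+t. Phi f (p t) * indicator {0..1} t \<partial>lborel)"
      by (simp add: Phi_shift[OF holo])
    finally show ?thesis .
  qed
  have iB: "(\<integral>\<^sup>+y. ?B y \<partial>lborel) = ennreal (1 / (2 * s)) * J"
  proof -
    have "(\<integral>\<^sup>+y. ?B y \<partial>lborel) = (\<integral>\<^sup>+t. Phi f ((x - s) + (2 * s) * t) * indicator {0..1} t \<partial>lborel)"
      using swap[of "\<lambda>t. x - s + 2 * s * t" "\<lambda>t. - s"] by (simp add: add.commute)
    also have "\<dots> = ennreal (1 / \<bar>2 * s\<bar>) * J"
      unfolding J_def
    proof (rule Phi_affine_avg[OF holo])
      fix t :: real
      have h1: "0 \<le> s * t \<longleftrightarrow> 0 \<le> t" using s by (simp add: zero_le_mult_iff)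
      have h2: "s * t \<le> s * 1 \<longleftrightarrow> t \<le> 1" using s by (simp only: mult_le_cancel_left_pos)
      have "(x - s + 2 * s * t \<in> {x - s..x + s}) \<longleftrightarrow> (t \<in> {0..1})"
        using h1 h2 by auto
      then show "indicator {x - s..x + s} (x - s + 2 * s * t) = (indicator {0..1} t :: ennreal)"
        by (simp add: indicator_def)
    qed (use s in auto)
    finally show ?thesis using s by simp
  qed
  have iT: "(\<integral>\<^sup>+y. ?T y \<partial>lborel) = ennreal (1 / (2 * s)) * J"
  proof -
    have "(\<integral>\<^sup>+y. ?T y \<partial>lborel) = (\<integral>\<^sup>+t. Phi f ((x + s) + (- 2 * s) * t) * indicator {0..1} t \<partial>lborel)"
      using swap[of "\<lambda>t. x + s - 2 * s * t" "\<lambda>t. s"] by (simp add: add.commute)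
    also have "\<dots> = ennreal (1 / \<bar>- 2 * s\<bar>) * J"
      unfolding J_def
    proof (rule Phi_affine_avg[OF holo])
      fix t :: real
      have h1: "0 \<le> s * t \<longleftrightarrow> 0 \<le> t" using s by (simp add: zero_le_mult_iff)
      have h2: "s * t \<le> s * 1 \<longleftrightarrow> t \<le> 1" using s by (simp only: mult_le_cancel_left_pos)
      have "(x + s + - 2 * s * t \<in> {x - s..x + s}) \<longleftrightarrow> (t \<in> {0..1})"
        using h1 h2 by auto
      then show "indicator {x - s..x + s} (x + s + - 2 * s * t) = (indicator {0..1} t :: ennreal)"
        by (simp add: indicator_def)
    qed (use s in auto)
    finally show ?thesis using s by simp
  qed
  have iR: "(\<integral>\<^sup>+y. ?R y \<partial>lborel) = Phi f (x + s)"
  proof -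
    have "(\<integral>\<^sup>+y. ?R y \<partial>lborel) = (\<integral>\<^sup>+(t::real). Phi f (x + s) * indicator {0..1} t \<partial>lborel)"
    proof -
      have "?R = (\<lambda>y. \<integral>\<^sup>+t. ennreal (Gf f (Complex (x + s) ((- s + 2 * s * t) + y))) * indicator {0..1} t \<partial>lborel)"
        by (intro ext nn_integral_cong) (simp add: algebra_simps)
      then show ?thesis using swap[of "\<lambda>t. x + s" "\<lambda>t. - s + 2 * s * t"] by simp
    qed
    also have "\<dots> = Phi f (x + s)" by (simp add: nn_integral_cmult_indicator)
    finally show ?thesis .
  qed
  have iL: "(\<integral>\<^sup>+y. ?L y \<partial>lborel) = Phi f (x - s)"
  proof -
    have "(\<integral>\<^sup>+y. ?L y \<partial>lborel) = (\<integral>\<^sup>+(t::real). Phi f (x - s) * indicator {0..1} t \<partial>lborel)"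
    proof -
      have "?L = (\<lambda>y. \<integral>\<^sup>+t. ennreal (Gf f (Complex (x - s) ((s - 2 * s * t) + y))) * indicator {0..1} t \<partial>lborel)"
        by (intro ext nn_integral_cong) (simp add: algebra_simps)
      then show ?thesis using swap[of "\<lambda>t. x - s" "\<lambda>t. s - 2 * s * t"] by simp
    qed
    also have "\<dots> = Phi f (x - s)" by (simp add: nn_integral_cmult_indicator)
    finally show ?thesis .
  qed
  have "Phi f x \<le> (\<integral>\<^sup>+y. ennreal (1/pi) * (?B y + ?R y + ?T y + ?L y) \<partial>lborel)"
    unfolding Phi_def by (intro nn_integral_mono pointwise_submean[OF holo s])
  also have "\<dots> = ennreal (1/pi) * ((\<integral>\<^sup>+y. ?B y \<partial>lborel) + (\<integral>\<^sup>+y. ?R y \<partial>lborel) + (\<integral>\<^sup>+y. ?T y \<partial>lborel) + (\<integral>\<^sup>+y. ?L y \<partial>lborel))"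
    by (simp add: nn_integral_cmult nn_integral_add)
  also have "\<dots> = ennreal (1/pi) * (Phi f (x + s) + Phi f (x - s) + (ennreal (1 / (2 * s)) + ennreal (1 / (2 * s))) * J)"
    unfolding iB iT iR iL by (simp add: distrib_right add_ac)
  also have "ennreal (1 / (2 * s)) + ennreal (1 / (2 * s)) = ennreal (1 / s)"
    using s by (subst ennreal_plus[symmetric]) auto
  finally show ?thesis unfolding J_def .
qed

lemma Phi_strip_bound:
  assumes holo: "f holomorphic_on C_plus" and t: "t > 0" and u: "t < u" "u < 2 * t"
  shows "Phi f u \<le> ennreal (4 / t) * (\<integral>\<^sup>+v. Phi f v * indicator {t/2..5*t/2} v \<partial>lborel)"
proof -
  note [measurable] = Phi_meas[OF holo]
  define J where "J = (\<integral>\<^sup>+v. Phi f v * indicator {t/2..5*t/2} v \<partial>lborel)"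
  have pw: "Phi f u * indicator {t/4..t/2} s \<le> ennreal (1/pi) * (Phi f (u + s) * indicator {t/4..t/2} s
      + Phi f (u - s) * indicator {t/4..t/2} s + ennreal (4 / t) * J * indicator {t/4..t/2} s)" for s
  proof (cases "s \<in> {t/4..t/2}")
    case True
    then have s: "0 < s" "s < u" using t u by auto
    have a1: "ennreal (1/s) \<le> ennreal (4/t)" using True t by (intro ennreal_leI) (auto simp: field_simps)
    have a2: "(\<integral>\<^sup>+v. Phi f v * indicator {u - s..u + s} v \<partial>lborel) \<le> J"
      unfolding J_def using True u by (intro nn_integral_mono mult_left_mono) (auto simp: indicator_def)
    have "ennreal (1/s) * (\<integral>\<^sup>+v. Phi f v * indicator {u - s..u + s} v \<partial>lborel) \<le> ennreal (4 / t) * J"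
      using a1 a2 by (rule mult_mono) auto
    then have "Phi f u \<le> ennreal (1/pi) * (Phi f (u + s) + Phi f (u - s) + ennreal (4 / t) * J)"
      using Phi_submean[OF holo s] by (meson add_left_mono mult_left_mono order_trans zero_le)
    then show ?thesis using True by simp
  qed simp
  have i1: "(\<integral>\<^sup>+s. Phi f (u + s) * indicator {t/4..t/2} s \<partial>lborel) \<le> J"
  proof -
    have "J = ennreal \<bar>1\<bar> * (\<integral>\<^sup>+s. Phi f (u + 1 * s) * indicator {t/2..5*t/2} (u + 1 * s) \<partial>lborel)"
      unfolding J_def by (rule nn_integral_real_affine) auto
    moreover have "(\<integral>\<^sup>+s. Phi f (u + s) * indicator {t/4..t/2} s \<partial>lborel)
        \<le> (\<integral>\<^sup>+s. Phi f (u + 1 * s) * indicator {t/2..5*t/2} (u + 1 * s) \<partial>lborel)"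
      using u t by (intro nn_integral_mono mult_left_mono) (auto simp: indicator_def)
    ultimately show ?thesis by simp
  qed
  have i2: "(\<integral>\<^sup>+s. Phi f (u - s) * indicator {t/4..t/2} s \<partial>lborel) \<le> J"
  proof -
    have "J = ennreal \<bar>-1\<bar> * (\<integral>\<^sup>+s. Phi f (u + -1 * s) * indicator {t/2..5*t/2} (u + -1 * s) \<partial>lborel)"
      unfolding J_def by (rule nn_integral_real_affine) auto
    moreover have "(\<integral>\<^sup>+s. Phi f (u - s) * indicator {t/4..t/2} s \<partial>lborel)
        \<le> (\<integral>\<^sup>+s. Phi f (u + -1 * s) * indicator {t/2..5*t/2} (u + -1 * s) \<partial>lborel)"
      using u t by (intro nn_integral_mono mult_left_mono) (auto simp: indicator_def)
    ultimately show ?thesis by simp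
  qed
  have "Phi f u * ennreal (t/4) = (\<integral>\<^sup>+s. Phi f u * indicator {t/4..t/2} s \<partial>lborel)"
    using t by (simp add: nn_integral_cmult_indicator mult.commute)
  also have "\<dots> \<le> (\<integral>\<^sup>+s. ennreal (1/pi) * (Phi f (u + s) * indicator {t/4..t/2} s
      + Phi f (u - s) * indicator {t/4..t/2} s + ennreal (4 / t) * J * indicator {t/4..t/2} s) \<partial>lborel)"
    by (intro nn_integral_mono pw)
  also have "\<dots> = ennreal (1/pi) * ((\<integral>\<^sup>+s. Phi f (u + s) * indicator {t/4..t/2} s \<partial>lborel)
      + (\<integral>\<^sup>+s. Phi f (u - s) * indicator {t/4..t/2} s \<partial>lborel) + ennreal (4 / t) * J * ennreal (t/4))"
    using t by (simp add: nn_integral_cmult nn_integral_add nn_integral_cmult_indicator)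
  also have "\<dots> \<le> ennreal (1/pi) * (J + J + ennreal (4 / t) * J * ennreal (t/4))"
    by (intro mult_left_mono add_mono i1 i2) auto
  also have "ennreal (4 / t) * J * ennreal (t/4) = J"
  proof -
    have "ennreal (4 / t) * ennreal (t/4) = 1" using t by (subst ennreal_mult[symmetric]) auto
    then show ?thesis by (metis mult.commute mult.left_commute mult_1_right)
  qed
  also have "ennreal (1/pi) * (J + J + J) = ennreal (3/pi) * J"
  proof -
    have e3: "ennreal 3 = 1 + 1 + 1" by (simp add: ennreal_plus[symmetric] del: ennreal_plus)
    have "ennreal (3/pi) = ennreal (1/pi) * ennreal 3" by (subst ennreal_mult[symmetric]) auto
    moreover have "(3::ennreal) * J = J + J + J"
      by (simp only: numeral_Bit1 numeral_One distrib_right mult_1)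
    ultimately show ?thesis by (simp add: mult.assoc)
  qed
  also have "\<dots> \<le> 1 * J"
    using pi_gt3 by (intro mult_right_mono) (auto simp: ennreal_le_1)
  finally have "Phi f u * ennreal (t/4) \<le> J" by simp
  then have "ennreal (4/t) * (Phi f u * ennreal (t/4)) \<le> ennreal (4/t) * J"
    by (rule mult_left_mono) simp
  moreover have "ennreal (4/t) * (Phi f u * ennreal (t/4)) = Phi f u"
  proof -
    have "ennreal (4 / t) * ennreal (t/4) = 1" using t by (subst ennreal_mult[symmetric]) auto
    then show ?thesis by (metis mult.commute mult.left_commute mult_1_right)
  qed
  ultimately show ?thesis unfolding J_def by simp
qed

lemma const_bound:
  fixes t \<alpha> :: real
  assumes t: "t > 0" and a: "\<alpha> < 0" "\<alpha> > -1"
  shows "(4 / t) * ((5 * t / 2) powr (-\<alpha>)) * (t powr (\<alpha> + 1) / (\<alpha> + 1)) \<le> 10 / (\<alpha> + 1)"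
proof -
  have e1: "(5 * t / 2) powr (-\<alpha>) = (5/2) powr (-\<alpha>) * t powr (-\<alpha>)"
    using t by (simp add: powr_mult[symmetric])
  have e2: "t powr (\<alpha> + 1) = t powr \<alpha> * t" using t by (simp add: powr_add)
  have e3: "t powr (-\<alpha>) * t powr \<alpha> = 1" using t by (simp add: powr_minus field_simps)
  have "(4 / t) * ((5 * t / 2) powr (-\<alpha>)) * (t powr (\<alpha> + 1) / (\<alpha> + 1))
      = 4 * (5/2) powr (-\<alpha>) * (t powr (-\<alpha>) * t powr \<alpha>) / (\<alpha> + 1)"
  proof -
    have "(4 / t) * ((5/2) powr (-\<alpha>) * t powr (-\<alpha>)) * (t powr \<alpha> * t) = 4 * (5/2) powr (-\<alpha>) * (t powr (-\<alpha>) * t powr \<alpha>)"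
      using t by (simp add: field_simps)
    then show ?thesis unfolding e1 e2 by (simp only: times_divide_eq_right)
  qed
  also have "\<dots> = 4 * (5/2) powr (-\<alpha>) / (\<alpha> + 1)" by (simp add: e3)
  also have "(5/2::real) powr (-\<alpha>) \<le> (5/2) powr 1"
    using a by (intro powr_mono) auto
  then have "4 * (5/2::real) powr (-\<alpha>) / (\<alpha> + 1) \<le> 4 * (5/2) / (\<alpha> + 1)"
    using a by (intro divide_right_mono mult_left_mono) auto
  finally show ?thesis by simp
qed

lemma powr_strip_integral:
  fixes t \<alpha> :: real
  assumes t: "t > 0" and a: "\<alpha> > -1"
  shows "(\<integral>\<^sup>+u. ennreal (indicator {t<..<2*t} u * (u - t) powr \<alpha>) \<partial>lborel) \<le> ennreal (t powr (\<alpha> + 1) / (\<alpha> + 1))"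
proof -
  have "(\<integral>\<^sup>+u. ennreal (indicator {t<..<2*t} u * (u - t) powr \<alpha>) \<partial>lborel)
      = ennreal \<bar>1\<bar> * (\<integral>\<^sup>+v. ennreal (indicator {t<..<2*t} (t + 1 * v) * ((t + 1 * v) - t) powr \<alpha>) \<partial>lborel)"
    by (rule nn_integral_real_affine) auto
  also have "\<dots> \<le> (\<integral>\<^sup>+v. ennreal (v powr \<alpha>) * indicator {0..t} v \<partial>lborel)"
    by (auto intro!: nn_integral_mono simp: indicator_def)
  also have "\<dots> = ennreal (t powr (\<alpha> + 1) / (\<alpha> + 1))"
    by (rule nn_integral_has_integral_lebesgue'[OF _ has_integral_powr_from_0[OF a]]) (use t in auto)
  finally show ?thesis .
qed

lemma transl:
  assumes holo: "f holomorphic_on C_plus" and a: "\<alpha> > -1" and t: "t \<ge> 0"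
  shows "(\<integral>\<^sup>+u. ennreal (indicator {t<..} u * (u - t) powr \<alpha>) * Phi f u \<partial>lborel)
    \<le> ennreal (2 + 10/(\<alpha>+1)) * (\<integral>\<^sup>+u. ennreal (indicator {0<..} u * u powr \<alpha>) * Phi f u \<partial>lborel)"
proof -
  note [measurable] = Phi_meas[OF holo]
  define N where "N = (\<integral>\<^sup>+u. ennreal (indicator {0<..} u * u powr \<alpha>) * Phi f u \<partial>lborel)"
  have K1: "1 \<le> 2 + 10/(\<alpha>+1)" using a by (simp add: field_simps)
  show ?thesis
  proof (cases "\<alpha> \<ge> 0 \<or> t = 0")
    case True
    have "(\<integral>\<^sup>+u. ennreal (indicator {t<..} u * (u - t) powr \<alpha>) * Phi f u \<partial>lborel)
        \<le> (\<integral>\<^sup>+u. ennreal (2 + 10/(\<alpha>+1)) * (ennreal (indicator {0<..} u * u powr \<alpha>) * Phi f u) \<partial>lborel)"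
    proof (intro nn_integral_mono)
      fix u :: real
      have "indicator {t<..} u * (u - t) powr \<alpha> \<le> (2 + 10/(\<alpha>+1)) * (indicator {0<..} u * u powr \<alpha>)"
      proof (cases "u > t")
        case ut: True
        have "(u - t) powr \<alpha> \<le> u powr \<alpha>"
          using True ut t by (auto intro: powr_mono2)
        also have "\<dots> \<le> (2 + 10/(\<alpha>+1)) * u powr \<alpha>"
          using mult_right_mono[OF K1, of "u powr \<alpha>"] by simp
        finally show ?thesis using ut t by simp
      qed (use t K1 in auto)
      then have "ennreal (indicator {t<..} u * (u - t) powr \<alpha>) \<le> ennreal (2 + 10/(\<alpha>+1)) * ennreal (indicator {0<..} u * u powr \<alpha>)"
        using K1 by (subst ennreal_mult[symmetric]) (auto intro: ennreal_leI)
      then show "ennreal (indicator {t<..} u * (u - t) powr \<alpha>) * Phi f u \<le> ennreal (2 + 10/(\<alpha>+1)) * (ennreal (indicator {0<..} u * u powr \<alpha>) * Phi f u)"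
        by (metis mult.assoc mult_right_mono zero_le)
    qed
    also have "\<dots> = ennreal (2 + 10/(\<alpha>+1)) * N"
      unfolding N_def by (rule nn_integral_cmult) auto
    finally show ?thesis unfolding N_def .
  next
    case False
    then have a0: "\<alpha> < 0" and tp: "t > 0" using t by auto
    define J where "J = (\<integral>\<^sup>+v. Phi f v * indicator {t/2..5*t/2} v \<partial>lborel)"
    define C where "C = (5 * t / 2) powr (-\<alpha>)"
    define P where "P = (\<integral>\<^sup>+u. ennreal (indicator {t<..<2*t} u * (u - t) powr \<alpha>) \<partial>lborel)"
    have pw: "ennreal (indicator {t<..} u * (u - t) powr \<alpha>) * Phi f u
        \<le> ennreal (indicator {t<..<2*t} u * (u - t) powr \<alpha>) * (ennreal (4 / t) * J)
          + ennreal 2 * (ennreal (indicator {0<..} u * u powr \<alpha>) * Phi f u)" for u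
    proof -
      consider "u \<le> t" | "t < u \<and> u < 2 * t" | "2 * t \<le> u" by linarith
      then show ?thesis
      proof cases
        case 1 then show ?thesis by simp
      next
        case 2
        then have "Phi f u \<le> ennreal (4 / t) * J" unfolding J_def using Phi_strip_bound[OF holo tp] by auto
        then show ?thesis using 2 by (intro add_increasing2) (auto intro: mult_left_mono)
      next
        case 3
        have h: "u / 2 \<le> u - t" "0 < u / 2" using 3 tp by auto
        have "(u - t) powr \<alpha> \<le> (u / 2) powr \<alpha>"
          using h a0 by (intro powr_mono2') auto
        also have "\<dots> = 2 powr (-\<alpha>) * u powr \<alpha>"
          using h by (simp add: powr_divide powr_minus divide_simps)
        also have "2 powr (-\<alpha>) \<le> (2::real) powr 1"
          using a by (intro powr_mono) auto
        then have "2 powr (-\<alpha>) * u powr \<alpha> \<le> 2 * u powr \<alpha>"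
          by (intro mult_right_mono) auto
        finally have "(u - t) powr \<alpha> \<le> 2 * u powr \<alpha>" .
        then have "ennreal (indicator {t<..} u * (u - t) powr \<alpha>) \<le> ennreal 2 * ennreal (indicator {0<..} u * u powr \<alpha>)"
          using 3 tp by (subst ennreal_mult[symmetric]) (auto intro: ennreal_leI)
        then have "ennreal (indicator {t<..} u * (u - t) powr \<alpha>) * Phi f u \<le> ennreal 2 * (ennreal (indicator {0<..} u * u powr \<alpha>) * Phi f u)"
          by (metis mult.assoc mult_right_mono zero_le)
        then show ?thesis by (rule order_trans) (intro add_increasing order_refl zero_le)
      qed
    qed
    have "(\<integral>\<^sup>+u. ennreal (indicator {t<..} u * (u - t) powr \<alpha>) * Phi f u \<partial>lborel)
        \<le> (\<integral>\<^sup>+u. ennreal (indicator {t<..<2*t} u * (u - t) powr \<alpha>) * (ennreal (4 / t) * J)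
          + ennreal 2 * (ennreal (indicator {0<..} u * u powr \<alpha>) * Phi f u) \<partial>lborel)"
      by (intro nn_integral_mono pw)
    also have "\<dots> = P * (ennreal (4 / t) * J) + ennreal 2 * N"
      unfolding P_def N_def by (simp add: nn_integral_add nn_integral_cmult nn_integral_multc)
    also have "P * (ennreal (4 / t) * J) \<le> ennreal (t powr (\<alpha> + 1) / (\<alpha> + 1)) * (ennreal (4 / t) * (ennreal C * N))"
    proof (rule mult_mono)
      show "P \<le> ennreal (t powr (\<alpha> + 1) / (\<alpha> + 1))" unfolding P_def by (rule powr_strip_integral[OF tp a])
      have "J \<le> (\<integral>\<^sup>+v. ennreal C * (ennreal (indicator {0<..} v * v powr \<alpha>) * Phi f v) \<partial>lborel)"
        unfolding J_def
      proof (intro nn_integral_mono)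
        fix v :: real
        show "Phi f v * indicator {t/2..5*t/2} v \<le> ennreal C * (ennreal (indicator {0<..} v * v powr \<alpha>) * Phi f v)"
        proof (cases "v \<in> {t/2..5*t/2}")
          case True
          then have vp: "v > 0" using tp by auto
          have "(5 * t / 2) powr \<alpha> \<le> v powr \<alpha>"
            using True vp a0 by (intro powr_mono2') auto
          then have "C * (5 * t / 2) powr \<alpha> \<le> C * v powr \<alpha>"
            unfolding C_def by (intro mult_left_mono) auto
          moreover have "C * (5 * t / 2) powr \<alpha> = 1"
            unfolding C_def using tp by (simp add: powr_minus)
          ultimately have "1 \<le> C * v powr \<alpha>" by simp
          then have "1 \<le> ennreal C * ennreal (indicator {0<..} v * v powr \<alpha>)"
            using vp unfolding C_def by (subst ennreal_mult[symmetric]) (auto intro: ennreal_leI)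
          then have "1 * Phi f v \<le> ennreal C * ennreal (indicator {0<..} v * v powr \<alpha>) * Phi f v"
            by (intro mult_right_mono) auto
          then show ?thesis using True by (simp add: mult.assoc)
        qed simp
      qed
      also have "\<dots> = ennreal C * N" unfolding N_def by (rule nn_integral_cmult) auto
      finally have "J \<le> ennreal C * N" .
      then show "ennreal (4 / t) * J \<le> ennreal (4 / t) * (ennreal C * N)" by (rule mult_left_mono) simp
    qed auto
    also have "ennreal (t powr (\<alpha> + 1) / (\<alpha> + 1)) * (ennreal (4 / t) * (ennreal C * N))
        = ennreal ((4 / t) * C * (t powr (\<alpha> + 1) / (\<alpha> + 1))) * N"
      using tp a unfolding C_def by (simp add: ennreal_mult'[symmetric] mult_ac)
    also have "\<dots> \<le> ennreal (10 / (\<alpha> + 1)) * N"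
      unfolding C_def using const_bound[OF tp a0 a] by (intro mult_right_mono ennreal_leI) auto
    finally have "(\<integral>\<^sup>+u. ennreal (indicator {t<..} u * (u - t) powr \<alpha>) * Phi f u \<partial>lborel)
       \<le> ennreal (10 / (\<alpha> + 1)) * N + ennreal 2 * N" by (simp add: add_right_mono)
    also have "\<dots> = ennreal (2 + 10/(\<alpha>+1)) * N"
    proof -
      have "ennreal (2 + 10/(\<alpha>+1)) = ennreal (10 / (\<alpha> + 1)) + ennreal 2"
        using a by (subst ennreal_plus[symmetric]) (auto simp: add.commute)
      then show ?thesis by (simp add: distrib_right)
    qed
    finally show ?thesis unfolding N_def .
  qed
qed

lemma comp_holo:
  assumes holo: "f holomorphic_on C_plus" and A: "A > 0" and c: "Re c \<ge> 0"
  shows "(f \<circ> (\<lambda>w. complex_of_real A * w + c)) holomorphic_on C_plus"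
proof -
  have "(\<lambda>w. complex_of_real A * w + c) ` C_plus \<subseteq> C_plus"
    using A c by (auto simp: C_plus_def intro!: add_pos_nonneg)
  then show ?thesis
    by (intro holomorphic_on_compose_gen[OF _ holo] holomorphic_intros) auto
qed

lemma comp_formula:
  assumes holo: "f holomorphic_on C_plus" and A: "A > 0" and c: "Re c \<ge> 0"
  shows "bergman_norm2 \<alpha> (f \<circ> (\<lambda>w. complex_of_real A * w + c)) = ennreal (1/pi) *
     (ennreal (1 / (A * A * A powr \<alpha>)) * (\<integral>\<^sup>+u. ennreal (indicator {Re c<..} u * (u - Re c) powr \<alpha>) * Phi f u \<partial>lborel))"
proof -
  note [measurable] = Gf_meas[OF holo] Phi_meas[OF holo]
  define g where "g = f \<circ> (\<lambda>w. complex_of_real A * w + c)"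
  have gh: "g holomorphic_on C_plus" unfolding g_def by (rule comp_holo[OF holo A c])
  define t where "t = Re c"
  have Phig: "Phi g x = ennreal (1 / A) * Phi f (t + A * x)" if x: "x > 0" for x
  proof -
    have "Phi f (t + A * x) = ennreal \<bar>A\<bar> * (\<integral>\<^sup>+y. ennreal (Gf f (Complex (t + A * x) (Im c + A * y))) \<partial>lborel)"
      unfolding Phi_def by (rule nn_integral_real_affine) (use A in auto)
    also have "(\<integral>\<^sup>+y. ennreal (Gf f (Complex (t + A * x) (Im c + A * y))) \<partial>lborel) = Phi g x"
      unfolding Phi_def
    proof (intro nn_integral_cong)
      fix y
      have pos: "0 < t + A * x" using A x c unfolding t_def by (simp add: add_nonneg_pos)
      have "complex_of_real A * Complex x y + c = Complex (t + A * x) (Im c + A * y)"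
        by (simp add: complex_eq_iff t_def)
      then show "ennreal (Gf f (Complex (t + A * x) (Im c + A * y))) = ennreal (Gf g (Complex x y))"
        using pos x by (simp add: Gf_in g_def)
    qed
    finally have "Phi f (t + A * x) = ennreal A * Phi g x" using A by simp
    then have "ennreal (1/A) * Phi f (t + A * x) = (ennreal (1/A) * ennreal A) * Phi g x" by (simp add: mult.assoc)
    also have "ennreal (1/A) * ennreal A = 1" using A by (subst ennreal_mult[symmetric]) auto
    finally show ?thesis by simp
  qed
  have sub: "(\<integral>\<^sup>+u. ennreal (indicator {t<..} u * (u - t) powr \<alpha>) * Phi f u \<partial>lborel)
      = ennreal (A * A powr \<alpha>) * (\<integral>\<^sup>+x. ennreal (indicator {0<..} x * x powr \<alpha>) * Phi f (t + A * x) \<partial>lborel)"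
  proof -
    have "(\<integral>\<^sup>+u. ennreal (indicator {t<..} u * (u - t) powr \<alpha>) * Phi f u \<partial>lborel)
       = ennreal \<bar>A\<bar> * (\<integral>\<^sup>+x. ennreal (indicator {t<..} (t + A * x) * ((t + A * x) - t) powr \<alpha>) * Phi f (t + A * x) \<partial>lborel)"
      by (rule nn_integral_real_affine) (use A in auto)
    also have "(\<integral>\<^sup>+x. ennreal (indicator {t<..} (t + A * x) * ((t + A * x) - t) powr \<alpha>) * Phi f (t + A * x) \<partial>lborel)
       = (\<integral>\<^sup>+x. ennreal (A powr \<alpha>) * (ennreal (indicator {0<..} x * x powr \<alpha>) * Phi f (t + A * x)) \<partial>lborel)"
    proof (intro nn_integral_cong)
      fix x :: real
      show "ennreal (indicator {t<..} (t + A * x) * ((t + A * x) - t) powr \<alpha>) * Phi f (t + A * x)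
          = ennreal (A powr \<alpha>) * (ennreal (indicator {0<..} x * x powr \<alpha>) * Phi f (t + A * x))"
      proof (cases "x > 0")
        case True
        then show ?thesis using A by (simp add: powr_mult ennreal_mult' mult.assoc)
      next
        case False
        then have "\<not> t < t + A * x" using A by (simp add: zero_less_mult_iff)
        then show ?thesis using False by simp
      qed
    qed
    also have "\<dots> = ennreal (A powr \<alpha>) * (\<integral>\<^sup>+x. ennreal (indicator {0<..} x * x powr \<alpha>) * Phi f (t + A * x) \<partial>lborel)"
      by (rule nn_integral_cmult) auto
    finally show ?thesis using A by (simp add: ennreal_mult mult.assoc)
  qed
  have "bergman_norm2 \<alpha> g = ennreal (1/pi) * (\<integral>\<^sup>+x. ennreal (indicator {0<..} x * x powr \<alpha>) * Phi g x \<partial>lborel)"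
    by (rule norm2_Phi[OF gh])
  also have "(\<integral>\<^sup>+x. ennreal (indicator {0<..} x * x powr \<alpha>) * Phi g x \<partial>lborel)
      = (\<integral>\<^sup>+x. ennreal (1 / A) * (ennreal (indicator {0<..} x * x powr \<alpha>) * Phi f (t + A * x)) \<partial>lborel)"
    by (intro nn_integral_cong) (auto simp: Phig indicator_def mult_ac)
  also have "\<dots> = ennreal (1 / A) * (\<integral>\<^sup>+x. ennreal (indicator {0<..} x * x powr \<alpha>) * Phi f (t + A * x) \<partial>lborel)"
    by (rule nn_integral_cmult) auto
  also have "(\<integral>\<^sup>+x. ennreal (indicator {0<..} x * x powr \<alpha>) * Phi f (t + A * x) \<partial>lborel)
      = ennreal (1 / (A * A powr \<alpha>)) * (\<integral>\<^sup>+u. ennreal (indicator {t<..} u * (u - t) powr \<alpha>) * Phi f u \<partial>lborel)"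
  proof -
    have "ennreal (1 / (A * A powr \<alpha>)) * ennreal (A * A powr \<alpha>) = 1"
      using A by (subst ennreal_mult[symmetric]) auto
    then show ?thesis unfolding sub by (simp add: mult.assoc[symmetric])
  qed
  also have "ennreal (1 / A) * (ennreal (1 / (A * A powr \<alpha>)) * X) = ennreal (1 / (A * A * A powr \<alpha>)) * X" for X
    using A by (simp add: mult.assoc[symmetric] ennreal_mult[symmetric])
  finally show ?thesis unfolding g_def t_def .
qed

lemma inv_sq_bound:
  fixes y :: real assumes y: "z > 0" "z^2 = y^2"
  shows "1 / (1 + y^2) \<le> z powr -2"
proof -
  have e: "z powr -2 = 1 / z^2" using y by (simp add: powr_minus_divide powr_numeral)
  have yp: "y^2 > 0" using y by (metis zero_less_power)
  have "1 / (1 + y^2) \<le> 1 / y^2"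
    using yp by (intro divide_left_mono) (auto simp: add_pos_nonneg)
  then show ?thesis using e y by simp
qed

lemma Q_finite: "(\<integral>\<^sup>+y. ennreal (1 / (1 + y^2)) \<partial>lborel) < \<infinity>"
proof -
  have i1: "(\<integral>\<^sup>+y. ennreal (y powr -2) * indicator {1..} y \<partial>lborel) = ennreal 1"
    using nn_integral_has_integral_lebesgue'[OF _ has_integral_powr_to_inf[of "-2" 1]] by simp
  have i2: "(\<integral>\<^sup>+y. ennreal ((-y) powr -2) * indicator {1..} (-y) \<partial>lborel) = ennreal 1"
  proof -
    have "(\<integral>\<^sup>+y. ennreal (y powr -2) * indicator {1..} y \<partial>lborel)
       = ennreal \<bar>-1\<bar> * (\<integral>\<^sup>+y. ennreal ((0 + -1 * y) powr -2) * indicator {1..} (0 + -1 * y) \<partial>lborel)"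
      by (rule nn_integral_real_affine) auto
    then show ?thesis using i1 by simp
  qed
  have "(\<integral>\<^sup>+y. ennreal (1 / (1 + y^2)) \<partial>lborel) \<le> (\<integral>\<^sup>+y. indicator {-1..1} y +
      ennreal (y powr -2) * indicator {1..} y + ennreal ((-y) powr -2) * indicator {1..} (-y) \<partial>lborel)"
  proof (intro nn_integral_mono)
    fix y :: real
    consider "y \<in> {-1..1}" | "y > 1" | "y < -1" by force
    then show "ennreal (1 / (1 + y^2)) \<le> indicator {-1..1} y +
      ennreal (y powr -2) * indicator {1..} y + ennreal ((-y) powr -2) * indicator {1..} (-y)"
    proof cases
      case 1
      have p: "0 < 1 + y^2" by (simp add: add_pos_nonneg)
      have "1 / (1 + y^2) \<le> 1" using p by (simp add: divide_le_eq)
      then show ?thesis using 1 by (auto intro!: add_increasing2 ennreal_leI simp: ennreal_1[symmetric] simp del: ennreal_1)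
    next
      case 2
      have "1 / (1 + y^2) \<le> y powr -2"
        using 2 by (intro inv_sq_bound) auto
      then show ?thesis using 2 by (auto intro!: add_increasing ennreal_leI)
    next
      case 3
      have "1 / (1 + y^2) \<le> (-y) powr -2"
        using 3 by (intro inv_sq_bound) auto
      then show ?thesis using 3 by (auto intro!: add_increasing ennreal_leI)
    qed
  qed
  also have "\<dots> = 2 + 1 + 1"
    by (subst nn_integral_add, simp, simp)+ (simp add: i1 i2)
  finally show ?thesis by (rule order_le_less_trans) simp
qed

definition f0 :: "complex \<Rightarrow> complex" where "f0 z = exp (- z) / (z + 1)"

lemma f0_holo: "f0 holomorphic_on C_plus"
proof -
  have "z + 1 \<noteq> 0" if "z \<in> C_plus" for z
    using that by (auto simp: C_plus_def complex_eq_iff)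
  then show ?thesis unfolding f0_def[abs_def] by (intro holomorphic_intros) auto
qed

lemma f0_G:
  assumes x: "x > 0"
  shows "Gf f0 (Complex x y) = exp (- x)^2 / ((x + 1)^2 + y^2)"
proof -
  have "cmod (exp (- Complex x y)) = exp (- x)" by simp
  moreover have "(cmod (Complex x y + 1))^2 = (x + 1)^2 + y^2"
    by (simp add: cmod_def)
  ultimately show ?thesis using x
    by (simp add: Gf_in f0_def norm_divide power_divide)
qed

lemma f0_Phi_upper:
  assumes x: "x > 0"
  shows "Phi f0 x \<le> ennreal (exp (- x)) * (\<integral>\<^sup>+y. ennreal (1 / (1 + y^2)) \<partial>lborel)"
proof -
  have "Phi f0 x \<le> (\<integral>\<^sup>+y. ennreal (exp (- x)) * ennreal (1 / (1 + y^2)) \<partial>lborel)"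
    unfolding Phi_def
  proof (intro nn_integral_mono)
    fix y :: real
    have e: "exp (- x)^2 \<le> exp (- x)"
      using x by (simp add: power2_eq_square mult_le_cancel_right1)
    have "1 \<le> (x + 1)^2" using x by (intro one_le_power) auto
    then have d: "1 + y^2 \<le> (x + 1)^2 + y^2" by simp
    have p: "0 < 1 + y^2" by (simp add: add_pos_nonneg)
    have "exp (- x)^2 / ((x + 1)^2 + y^2) \<le> exp (- x) / (1 + y^2)"
      using e d p by (intro frac_le) auto
    then show "ennreal (Gf f0 (Complex x y)) \<le> ennreal (exp (- x)) * ennreal (1 / (1 + y^2))"
      using x by (simp add: f0_G ennreal_mult'[symmetric])
  qed
  also have "\<dots> = ennreal (exp (- x)) * (\<integral>\<^sup>+y. ennreal (1 / (1 + y^2)) \<partial>lborel)"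
    by (rule nn_integral_cmult) auto
  finally show ?thesis .
qed

lemma f0_norm_finite:
  assumes a: "\<alpha> > -1"
  shows "bergman_norm2 \<alpha> f0 < \<infinity>"
proof -
  define Q where "Q = (\<integral>\<^sup>+y. ennreal (1 / (1 + y^2)) \<partial>lborel)"
  have "(\<integral>\<^sup>+x. ennreal (indicator {0<..} x * x powr \<alpha>) * Phi f0 x \<partial>lborel)
      \<le> (\<integral>\<^sup>+x. ennreal (indicator {0..} x * x powr ((\<alpha> + 1) - 1) / exp x) * Q \<partial>lborel)"
  proof (intro nn_integral_mono)
    fix x :: real
    show "ennreal (indicator {0<..} x * x powr \<alpha>) * Phi f0 x \<le> ennreal (indicator {0..} x * x powr ((\<alpha> + 1) - 1) / exp x) * Q"
    proof (cases "x > 0")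
      case True
      have "ennreal (indicator {0<..} x * x powr \<alpha>) * Phi f0 x \<le> ennreal (x powr \<alpha>) * (ennreal (exp (- x)) * Q)"
        using True f0_Phi_upper[OF True] unfolding Q_def by (auto intro: mult_left_mono)
      also have "\<dots> = ennreal (indicator {0..} x * x powr ((\<alpha> + 1) - 1) / exp x) * Q"
        using True by (simp add: ennreal_mult'[symmetric] mult.assoc exp_minus field_simps)
      finally show ?thesis .
    qed simp
  qed
  also have "\<dots> = (\<integral>\<^sup>+x. ennreal (indicator {0..} x * x powr ((\<alpha> + 1) - 1) / exp x) \<partial>lborel) * Q"
    by (rule nn_integral_multc) auto
  also have "\<dots> = ennreal (Gamma (\<alpha> + 1)) * Q"
    using Gamma_conv_nn_integral_real[of "\<alpha> + 1"] a by simp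
  also have "\<dots> < \<infinity>" using Q_finite unfolding Q_def by (simp add: ennreal_mult_less_top)
  finally have "(\<integral>\<^sup>+x. ennreal (indicator {0<..} x * x powr \<alpha>) * Phi f0 x \<partial>lborel) < \<infinity>" .
  then show ?thesis by (simp add: norm2_Phi[OF f0_holo] ennreal_mult_less_top)
qed

lemma f0_Phi_lower:
  assumes u: "u > 0"
  shows "ennreal (exp (- u)^2 / ((u + 1)^2 + 1)) \<le> Phi f0 u"
proof -
  have "ennreal (exp (- u)^2 / ((u + 1)^2 + 1)) = (\<integral>\<^sup>+(y::real). ennreal (exp (- u)^2 / ((u + 1)^2 + 1)) * indicator {0..1} y \<partial>lborel)"
    by (simp add: nn_integral_cmult_indicator)
  also have "\<dots> \<le> Phi f0 u"
    unfolding Phi_def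
  proof (intro nn_integral_mono)
    fix y :: real
    show "ennreal (exp (- u)^2 / ((u + 1)^2 + 1)) * indicator {0..1} y \<le> ennreal (Gf f0 (Complex u y))"
    proof (cases "y \<in> {0..1}")
      case True
      then have "y^2 \<le> 1" by (simp add: power_le_one)
      then have "exp (- u)^2 / ((u + 1)^2 + 1) \<le> exp (- u)^2 / ((u + 1)^2 + y^2)"
        using u by (intro divide_left_mono) (auto simp: add_pos_nonneg)
      then show ?thesis using True u by (simp add: f0_G)
    qed simp
  qed
  finally show ?thesis .
qed

lemma iter_eq:
  "(comp_op (\<lambda>w. complex_of_real a * w + b) ^^ j) f
     = f \<circ> (\<lambda>w. complex_of_real (a^j) * w + b * complex_of_real (\<Sum>i<j. a^i))"
proof (induction j)
  case 0
  then show ?case by (simp add: comp_def)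
next
  case (Suc j)
  have "(comp_op (\<lambda>w. complex_of_real a * w + b) ^^ Suc j) f
      = comp_op (\<lambda>w. complex_of_real a * w + b) ((comp_op (\<lambda>w. complex_of_real a * w + b) ^^ j) f)"
    by simp
  also have "\<dots> = f \<circ> (\<lambda>w. complex_of_real (a^j) * w + b * complex_of_real (\<Sum>i<j. a^i)) \<circ> (\<lambda>w. complex_of_real a * w + b)"
    unfolding Suc comp_op_def ..
  also have "\<dots> = f \<circ> (\<lambda>w. complex_of_real (a^Suc j) * w + b * complex_of_real (\<Sum>i<Suc j. a^i))"
    by (rule ext) (simp add: algebra_simps)
  finally show ?case .
qed

lemma bernoulli_simple:
  fixes h :: real assumes "h \<ge> 0" shows "1 + real n * h \<le> (1 + h)^n"
proof (induction n)
  case 0 then show ?case by simp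
next
  case (Suc n)
  have "1 + real (Suc n) * h \<le> (1 + real n * h) * (1 + h)"
    using assms by (simp add: algebra_simps)
  also have "\<dots> \<le> (1 + h)^n * (1 + h)"
    using Suc assms by (intro mult_right_mono) auto
  finally show ?case by (simp add: mult.commute)
qed

lemma growth:
  fixes q c B :: real
  assumes q: "q > 1" and c: "c > 0"
  shows "\<exists>n::nat. n \<ge> 1 \<and> c * q^n > B * real n"
proof -
  define p where "p = sqrt q"
  define h where "h = p - 1"
  have p1: "p > 1" unfolding p_def using q by simp
  have h0: "h > 0" unfolding h_def using p1 by simp
  define n where "n = nat \<lceil>\<bar>B\<bar> / (c * h^2)\<rceil> + 1"
  have n1: "n \<ge> 1" unfolding n_def by simp
  have nB: "real n > \<bar>B\<bar> / (c * h^2)" unfolding n_def by linarith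
  have ch: "c * h^2 > 0" using c h0 by simp
  have "\<bar>B\<bar> < c * h^2 * real n" using nB ch by (simp add: field_simps)
  have pn: "real n * h \<le> p^n"
    using bernoulli_simple[of h n] h0 unfolding h_def by simp
  have pq: "p^2 = q" unfolding p_def using q by simp
  have "(p^n)^2 = (p^2)^n" by (metis power_mult mult.commute)
  then have "q^n = (p^n)^2" using pq by simp
  also have "\<dots> \<ge> (real n * h)^2" using pn h0 by (intro power_mono) auto
  finally have qn: "q^n \<ge> (real n * h)^2" .
  have "B * real n \<le> \<bar>B\<bar> * real n" by (simp add: mult_right_mono)
  also have "\<dots> < c * h^2 * real n * real n"
    using \<open>\<bar>B\<bar> < c * h^2 * real n\<close> n1 by (intro mult_strict_right_mono) auto
  also have "\<dots> = c * (real n * h)^2" by (simp add: power2_eq_square)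
  also have "\<dots> \<le> c * q^n" using qn c by (intro mult_left_mono) auto
  finally show ?thesis using n1 by blast
qed

lemma AAA_powr:
  fixes A \<alpha> :: real assumes "A > 0" shows "A * A * A powr \<alpha> = A powr (2 + \<alpha>)"
  using assms by (simp add: powr_add powr_numeral power2_eq_square)

lemma AAA_pow:
  fixes a \<alpha> :: real assumes a: "a > 0"
  shows "a^j * a^j * (a^j) powr \<alpha> = (a * a * a powr \<alpha>)^j"
proof (induction j)
  case 0 then show ?case by simp
next
  case (Suc j)
  have "a^Suc j * a^Suc j * (a^Suc j) powr \<alpha> = (a * a * a powr \<alpha>) * (a^j * a^j * (a^j) powr \<alpha>)"
    using a by (simp add: powr_mult)
  then show ?case using Suc by simp
qed

lemma Re_b_real: "Re (b * complex_of_real r) = Re b * r"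
  by simp

lemma sum_nonneg_pow: "(a::real) > 0 \<Longrightarrow> 0 \<le> (\<Sum>i<j. a^i)"
  by (intro sum_nonneg) auto

theorem mainTheorem9:
  fixes \<alpha> a :: real and b :: complex
  assumes "\<alpha> > -1" and "a > 0" and "Re b \<ge> 0"
  shows "abs_cesaro_bounded (bergman_space \<alpha>) (bergman_norm \<alpha>)
           (comp_op (\<lambda>w. of_real a * w + b)) \<longleftrightarrow> a \<ge> 1"
proof -
  note al = assms(1) and a0 = assms(2) and rb = assms(3)
  define T where "T = comp_op (\<lambda>w. complex_of_real a * w + b)"
  define K where "K = 2 + 10/(\<alpha>+1)"
  have K1: "K \<ge> 1" unfolding K_def using al by (simp add: field_simps)
  define S where "S j = (\<Sum>i<j. a^i)" for j
  have S0: "S j \<ge> 0" for j unfolding S_def using a0 by (intro sum_nonneg) auto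
  define I where "I f j = (\<integral>\<^sup>+u. ennreal (indicator {Re b * S j<..} u * (u - Re b * S j) powr \<alpha>) * Phi f u \<partial>lborel)" for f j
  define Nint where "Nint f = (\<integral>\<^sup>+u. ennreal (indicator {0<..} u * u powr \<alpha>) * Phi f u \<partial>lborel)" for f
  have key: "bergman_norm2 \<alpha> ((T ^^ j) f) = ennreal (1/pi) * (ennreal (1 / (a^j * a^j * (a^j) powr \<alpha>)) * I f j)"
    if holo: "f holomorphic_on C_plus" for f j
  proof -
    have "(T ^^ j) f = f \<circ> (\<lambda>w. complex_of_real (a^j) * w + b * complex_of_real (S j))"
      unfolding T_def S_def by (rule iter_eq)
    moreover have "Re (b * complex_of_real (S j)) \<ge> 0" using rb S0 by simp
    ultimately show ?thesis
      unfolding I_def using comp_formula[OF holo _ , of "a^j" "b * complex_of_real (S j)" \<alpha>] a0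
      by simp
  qed
  have upper: "I f j \<le> ennreal K * Nint f" if holo: "f holomorphic_on C_plus" for f j
    unfolding I_def Nint_def K_def
    by (rule transl[OF holo al]) (use rb S0 in simp)
  have norm2N: "bergman_norm2 \<alpha> f = ennreal (1/pi) * Nint f" if holo: "f holomorphic_on C_plus" for f
    unfolding Nint_def by (rule norm2_Phi[OF holo])
  show ?thesis
  proof
    assume bdd: "abs_cesaro_bounded (bergman_space \<alpha>) (bergman_norm \<alpha>) (comp_op (\<lambda>w. of_real a * w + b))"
    show "a \<ge> 1"
    proof (rule ccontr)
      assume "\<not> a \<ge> 1"
      then have a1: "a < 1" by simp
      obtain M where M: "M > 0" and Mb: "\<And>x n. x \<in> bergman_space \<alpha> \<Longrightarrow> n \<ge> 1 \<Longrightarrow>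
          (1 / real n) * (\<Sum>j=1..n. bergman_norm \<alpha> ((T ^^ j) x)) \<le> M * bergman_norm \<alpha> x"
        using bdd unfolding abs_cesaro_bounded_def T_def by blast
      have f0X: "f0 \<in> bergman_space \<alpha>"
        unfolding bergman_space_def using f0_holo f0_norm_finite[OF al] by auto
      define T0 where "T0 = Re b / (1 - a)"
      have T0: "T0 \<ge> 0" unfolding T0_def using rb a1 by simp
      have tj: "Re b * S j \<le> T0" for j
      proof -
        have "S j = (1 - a^j) / (1 - a)" unfolding S_def using a1 by (simp add: sum_gp_strict)
        also have "\<dots> \<le> 1 / (1 - a)" using a1 a0 by (intro divide_right_mono) auto
        finally have "Re b * S j \<le> Re b * (1 / (1 - a))" by (rule mult_left_mono[OF _ rb])
        then show ?thesis unfolding T0_def by simp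
      qed
      define m where "m = min 1 ((T0 + 2) powr \<alpha>)"
      define d where "d = exp (- (T0 + 2))^2 / ((T0 + 3)^2 + 1)"
      have m0: "m > 0" unfolding m_def using T0 by simp
      have d0: "d > 0" unfolding d_def
        by (intro divide_pos_pos) (simp, simp add: add_nonneg_pos)
      have lower: "ennreal (m * d) \<le> I f0 j" for j
      proof -
        let ?t = "Re b * S j"
        have "ennreal (m * d) = (\<integral>\<^sup>+u. ennreal (m * d) * indicator {T0+1..T0+2} u \<partial>lborel)"
          by (simp add: nn_integral_cmult_indicator)
        also have "\<dots> \<le> I f0 j"
          unfolding I_def
        proof (intro nn_integral_mono)
          fix u :: real
          show "ennreal (m * d) * indicator {T0+1..T0+2} u \<le> ennreal (indicator {?t<..} u * (u - ?t) powr \<alpha>) * Phi f0 u"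
          proof (cases "u \<in> {T0+1..T0+2}")
            case True
            have t0: "?t \<ge> 0" using rb S0[of j] by simp
            have ut: "u > ?t" "1 \<le> u - ?t" "u - ?t \<le> T0 + 2" using True tj[of j] t0 by auto
            have mle: "m \<le> (u - ?t) powr \<alpha>"
            proof (cases "\<alpha> \<ge> 0")
              case True
              then have "1 \<le> (u - ?t) powr \<alpha>" using ut by (intro ge_one_powr_ge_zero) auto
              then show ?thesis unfolding m_def by simp
            next
              case False
              then have "(T0 + 2) powr \<alpha> \<le> (u - ?t) powr \<alpha>" using ut by (intro powr_mono2') auto
              then show ?thesis unfolding m_def by simp
            qed
            have u0: "u > 0" using True T0 by auto
            have "d \<le> exp (- u)^2 / ((u + 1)^2 + 1)"
              unfolding d_def
            proof (rule frac_le)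
              show "exp (- (T0 + 2))^2 \<le> exp (- u)^2" using True by (intro power_mono) auto
              show "(u + 1)^2 + 1 \<le> (T0 + 3)^2 + 1" using True u0 by (simp add: power_mono)
            qed (auto simp: add_nonneg_pos)
            then have "ennreal d \<le> Phi f0 u"
              using f0_Phi_lower[OF u0] by (meson ennreal_leI order_trans)
            then have "ennreal m * ennreal d \<le> ennreal ((u - ?t) powr \<alpha>) * Phi f0 u"
              using mle by (intro mult_mono ennreal_leI) auto
            then show ?thesis using True ut m0 d0 by (simp add: ennreal_mult)
          qed simp
        qed
        finally show ?thesis .
      qed
      define \<rho> where "\<rho> = a * a * a powr \<alpha>"
      have \<rho>eq: "\<rho> = a powr (2 + \<alpha>)" unfolding \<rho>_def using a0 by (rule AAA_powr)
      have \<rho>0: "\<rho> > 0" unfolding \<rho>_def using a0 by simp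
      have \<rho>1: "\<rho> < 1"
      proof -
        have "a powr (2 + \<alpha>) < 1 powr (2 + \<alpha>)" using a0 a1 al by (intro powr_less_mono2) auto
        then show ?thesis using \<rho>eq by simp
      qed
      have Nf0: "Nint f0 < \<infinity>"
      proof -
        have "ennreal (1/pi) * Nint f0 < \<infinity>" using norm2N[OF f0_holo] f0_norm_finite[OF al] by simp
        then show ?thesis by (auto simp: ennreal_mult_less_top ennreal_mult_eq_top_iff top.not_eq_extremum)
      qed
      define c where "c = sqrt (m * d / pi)"
      have c0: "c > 0" unfolding c_def using m0 d0 by simp
      define q where "q = 1 / sqrt \<rho>"
      have sr: "sqrt \<rho> < 1" "sqrt \<rho> > 0" using \<rho>0 \<rho>1 by auto
      have q1: "q > 1" unfolding q_def using sr by (simp add: less_divide_eq)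
      have nrm_lower: "c * q^j \<le> bergman_norm \<alpha> ((T ^^ j) f0)" for j
      proof -
        have e: "a^j * a^j * (a^j) powr \<alpha> = \<rho>^j" unfolding \<rho>_def using a0 by (rule AAA_pow)
        have le1: "ennreal (m * d / (pi * \<rho>^j)) \<le> bergman_norm2 \<alpha> ((T ^^ j) f0)"
        proof -
          have "ennreal (m * d / (pi * \<rho>^j)) = ennreal (1/pi) * (ennreal (1 / \<rho>^j) * ennreal (m * d))"
            using m0 d0 \<rho>0 by (simp add: ennreal_mult'[symmetric])
          also have "\<dots> \<le> ennreal (1/pi) * (ennreal (1 / \<rho>^j) * I f0 j)"
            by (intro mult_left_mono lower) auto
          finally show ?thesis unfolding key[OF f0_holo] e .
        qed
        have fin: "bergman_norm2 \<alpha> ((T ^^ j) f0) < \<infinity>"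
        proof -
          have "bergman_norm2 \<alpha> ((T ^^ j) f0) \<le> ennreal (1/pi) * (ennreal (1 / \<rho>^j) * (ennreal K * Nint f0))"
            unfolding key[OF f0_holo] e by (intro mult_left_mono upper[OF f0_holo]) auto
          also have "\<dots> < \<infinity>" using Nf0 by (simp add: ennreal_mult_less_top)
          finally show ?thesis .
        qed
        have "m * d / (pi * \<rho>^j) \<le> enn2real (bergman_norm2 \<alpha> ((T ^^ j) f0))"
          using enn2real_mono[OF le1] fin m0 d0 \<rho>0 by simp
        then have "sqrt (m * d / (pi * \<rho>^j)) \<le> bergman_norm \<alpha> ((T ^^ j) f0)"
          unfolding bergman_norm_def by simp
        moreover have "sqrt (m * d / (pi * \<rho>^j)) = c * q^j"
          unfolding c_def q_def using \<rho>0
          by (simp add: real_sqrt_divide real_sqrt_mult real_sqrt_power power_one_over divide_simps)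
        ultimately show ?thesis by simp
      qed
      obtain n :: nat where n1: "n \<ge> 1" and big: "c * q^n > (M * bergman_norm \<alpha> f0) * real n"
        using growth[OF q1 c0] by blast
      have "c * q^n \<le> bergman_norm \<alpha> ((T ^^ n) f0)" by (rule nrm_lower)
      also have "\<dots> \<le> (\<Sum>j=1..n. bergman_norm \<alpha> ((T ^^ j) f0))"
        using n1 by (intro member_le_sum) (auto simp: bergman_norm_def)
      also have "\<dots> = real n * ((1 / real n) * (\<Sum>j=1..n. bergman_norm \<alpha> ((T ^^ j) f0)))"
        using n1 by simp
      also have "\<dots> \<le> real n * (M * bergman_norm \<alpha> f0)"
        using Mb[OF f0X n1] by (intro mult_left_mono) auto
      finally show False using big by (simp add: mult.commute)
    qed
  next
    assume a1: "a \<ge> 1"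
    show "abs_cesaro_bounded (bergman_space \<alpha>) (bergman_norm \<alpha>) (comp_op (\<lambda>w. of_real a * w + b))"
      unfolding abs_cesaro_bounded_def T_def[symmetric]
    proof (intro exI[of _ "sqrt K"] conjI ballI allI impI)
      show "sqrt K > 0" using K1 by simp
      fix x n assume xX: "x \<in> bergman_space \<alpha>" and n1: "(n::nat) \<ge> 1"
      have holo: "x holomorphic_on C_plus" and fin: "bergman_norm2 \<alpha> x < \<infinity>"
        using xX unfolding bergman_space_def by auto
      have each: "bergman_norm \<alpha> ((T ^^ j) x) \<le> sqrt K * bergman_norm \<alpha> x" for j
      proof -
        have A1: "1 \<le> a^j" using a1 by (rule one_le_power)
        have "1 \<le> (a^j) powr (2 + \<alpha>)" using A1 al by (intro ge_one_powr_ge_zero) auto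
        then have "1 \<le> a^j * a^j * (a^j) powr \<alpha>" using A1 by (subst AAA_powr) auto
        then have c1: "ennreal (1 / (a^j * a^j * (a^j) powr \<alpha>)) \<le> 1"
          by (simp add: ennreal_le_1 divide_le_eq)
        have "bergman_norm2 \<alpha> ((T ^^ j) x) \<le> ennreal (1/pi) * (1 * (ennreal K * Nint x))"
          unfolding key[OF holo] by (intro mult_left_mono mult_mono c1 upper[OF holo]) auto
        also have "\<dots> = ennreal K * bergman_norm2 \<alpha> x"
          unfolding norm2N[OF holo] by (simp add: mult_ac)
        finally have le: "bergman_norm2 \<alpha> ((T ^^ j) x) \<le> ennreal K * bergman_norm2 \<alpha> x" .
        have "enn2real (bergman_norm2 \<alpha> ((T ^^ j) x)) \<le> enn2real (ennreal K * bergman_norm2 \<alpha> x)"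
          using le fin by (intro enn2real_mono) (auto simp: ennreal_mult_less_top)
        also have "\<dots> = K * enn2real (bergman_norm2 \<alpha> x)"
          using K1 by (simp add: enn2real_mult)
        finally have "sqrt (enn2real (bergman_norm2 \<alpha> ((T ^^ j) x))) \<le> sqrt (K * enn2real (bergman_norm2 \<alpha> x))"
          by simp
        then show ?thesis unfolding bergman_norm_def by (simp add: real_sqrt_mult)
      qed
      have "(\<Sum>j=1..n. bergman_norm \<alpha> ((T ^^ j) x)) \<le> real (card {1..n}) * (sqrt K * bergman_norm \<alpha> x)"
        by (rule sum_bounded_above) (rule each)
      then have "(\<Sum>j=1..n. bergman_norm \<alpha> ((T ^^ j) x)) \<le> real n * (sqrt K * bergman_norm \<alpha> x)"
        by simp
      then have "(1 / real n) * (\<Sum>j=1..n. bergman_norm \<alpha> ((T ^^ j) x)) \<le> (1 / real n) * (real n * (sqrt K * bergman_norm \<alpha> x))"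
        by (intro mult_left_mono) auto
      also have "\<dots> = sqrt K * bergman_norm \<alpha> x" using n1 by simp
      finally show "(1 / real n) * (\<Sum>j=1..n. bergman_norm \<alpha> ((T ^^ j) x)) \<le> sqrt K * bergman_norm \<alpha> x" .
    qed
  qed
qed


end
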